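(* Every countable crowded $T_1$ space of $\pi$-weight smaller than $\mathfrak{m}_c$ is selectively separable.
   Context: A space is crowded if it has no isolated points. A space $X$ is selectively separable if for every sequence $(D_n)_{n\in\omega}$ of dense subsets of $X$ there are finite $F_n\subseteq D_n$ with $\bigcup_n F_n$ dense in $X$. $\mathfrak{m}_c$ is the least cardinal $\kappa$ such that MA$(\kappa)$ for countable posets fails. *)

theory Defs
  imports "HOL-Analysis.Analysis"
begin

definition dense_in :: "'a topology \<Rightarrow> 'a set \<Rightarrow> bool" where
  "dense_in X D \<longleftrightarrow> D \<subseteq> topspace X \<and> X closure_of D = topspace X"

definition crowded :: "'a topology \<Rightarrow> bool" where
  "crowded X \<longleftrightarrow> (\<forall>x\<in>topspace X. \<not> openin X {x})"

definition selectively_separable :: "'a topology \<Rightarrow> bool" where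
  "selectively_separable X \<longleftrightarrow>
     (\<forall>D :: nat \<Rightarrow> 'a set. (\<forall>n. dense_in X (D n)) \<longrightarrow>
        (\<exists>F :: nat \<Rightarrow> 'a set. (\<forall>n. finite (F n) \<and> F n \<subseteq> D n) \<and> dense_in X (\<Union>n. F n)))"

definition pi_base :: "'a topology \<Rightarrow> 'a set set \<Rightarrow> bool" where
  "pi_base X B \<longleftrightarrow> (\<forall>U\<in>B. openin X U \<and> U \<noteq> {}) \<and>
     (\<forall>V. openin X V \<and> V \<noteq> {} \<longrightarrow> (\<exists>U\<in>B. U \<subseteq> V))"

text \<open>Countable posets: every countable poset is isomorphic to one carried by a
  subset of nat.  P is a nonempty set S with a partial order le on S.\<close>
definition ctbl_poset :: "nat set \<Rightarrow> (nat \<Rightarrow> nat \<Rightarrow> bool) \<Rightarrow> bool" where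
  "ctbl_poset S le \<longleftrightarrow> S \<noteq> {} \<and>
     (\<forall>p\<in>S. le p p) \<and>
     (\<forall>p\<in>S. \<forall>q\<in>S. le p q \<and> le q p \<longrightarrow> p = q) \<and>
     (\<forall>p\<in>S. \<forall>q\<in>S. \<forall>r\<in>S. le p q \<and> le q r \<longrightarrow> le p r)"

definition dense_poset :: "nat set \<Rightarrow> (nat \<Rightarrow> nat \<Rightarrow> bool) \<Rightarrow> nat set \<Rightarrow> bool" where
  "dense_poset S le D \<longleftrightarrow> D \<subseteq> S \<and> (\<forall>p\<in>S. \<exists>q\<in>D. le q p)"

definition filter_poset :: "nat set \<Rightarrow> (nat \<Rightarrow> nat \<Rightarrow> bool) \<Rightarrow> nat set \<Rightarrow> bool" where
  "filter_poset S le G \<longleftrightarrow> G \<subseteq> S \<and> G \<noteq> {} \<and>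
     (\<forall>p\<in>G. \<forall>q\<in>S. le p q \<longrightarrow> q \<in> G) \<and>
     (\<forall>p\<in>G. \<forall>q\<in>G. \<exists>r\<in>G. le r p \<and> le r q)"

definition MA_countable :: "'i set \<Rightarrow> bool" where
  "MA_countable I \<longleftrightarrow>
     (\<forall>S le (D :: 'i \<Rightarrow> nat set). ctbl_poset S le \<and> (\<forall>i\<in>I. dense_poset S le (D i)) \<longrightarrow>
        (\<exists>G. filter_poset S le G \<and> (\<forall>i\<in>I. G \<inter> D i \<noteq> {})))"

text \<open>|A| < m_c, where m_c is the least cardinal kappa for which MA(kappa) for countable
  posets fails: i.e. MA(kappa) holds for every cardinal kappa \<le> |A|, and the cardinals
  \<le> |A| are exactly the |B| with B \<subseteq> A.\<close>
definition card_less_mc :: "'i set \<Rightarrow> bool" where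
  "card_less_mc A \<longleftrightarrow> (\<forall>B. B \<subseteq> A \<longrightarrow> MA_countable B)"

text \<open>pi-weight(X) < m_c: since pi-weight is the least size of a pi-base.\<close>
definition piweight_less_mc :: "'a topology \<Rightarrow> bool" where
  "piweight_less_mc X \<longleftrightarrow> (\<exists>B. pi_base X B \<and> card_less_mc B)"

end

theory Submission
  imports Defs "HOL-Library.Sublist"
begin

lemma prefix_nth_eq: "prefix xs ys \<Longrightarrow> i < length xs \<Longrightarrow> ys ! i = xs ! i"
  by (auto simp: prefix_def nth_append)

theorem mainTheorem7:
  fixes X :: "'a topology"
  assumes "countable (topspace X)"
    and "crowded X"
    and "t1_space X"
    and "piweight_less_mc X"
  shows "selectively_separable X"
  unfolding selectively_separable_def
proof (intro allI impI)
  fix D :: "nat \<Rightarrow> 'a set"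
  assume dD: "\<forall>n. dense_in X (D n)"
  obtain B where pB: "pi_base X B" and MA: "MA_countable B"
    using assms(4) unfolding piweight_less_mc_def card_less_mc_def by blast
  define C where "C = {xs \<in> lists {A. finite A \<and> A \<subseteq> topspace X}.
                        \<forall>i<length xs. xs ! i \<subseteq> D i}"
  have cC: "countable C"
    unfolding C_def
    by (rule countable_subset[OF _ countable_lists[OF countable_Collect_finite_subset[OF assms(1)]]]) auto
  define enc where "enc = to_nat_on C"
  define dec where "dec = from_nat_into C"
  define S where "S = enc ` C"
  have decS: "s \<in> S \<Longrightarrow> dec s \<in> C" for s
    using cC by (auto simp: S_def enc_def dec_def)
  have decenc: "c \<in> C \<Longrightarrow> dec (enc c) = c" for c
    using cC by (simp add: enc_def dec_def)
  have injS: "s \<in> S \<Longrightarrow> t \<in> S \<Longrightarrow> dec s = dec t \<Longrightarrow> s = t" for s t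
    by (auto simp: S_def decenc)
  define le where "le = (\<lambda>a b. prefix (dec b) (dec a))"
  have DT: "D n \<subseteq> topspace X" for n using dD by (simp add: dense_in_def)
  have Dmeet: "openin X U \<Longrightarrow> U \<noteq> {} \<Longrightarrow> D n \<inter> U \<noteq> {}" for U n
    using dD unfolding dense_in_def dense_intersects_open by blast
  have nilC: "[] \<in> C" by (simp add: C_def)
  have poset: "ctbl_poset S le"
    unfolding ctbl_poset_def le_def
    using nilC injS by (auto simp: S_def intro: prefix_order.antisym)
  define DU where "DU = (\<lambda>U. {s \<in> S. \<exists>i<length (dec s). dec s ! i \<inter> U \<noteq> {}})"
  have dense: "dense_poset S le (DU U)" if "U \<in> B" for U
    unfolding dense_poset_def
  proof (intro conjI ballI)
    show "DU U \<subseteq> S" by (auto simp: DU_def)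
    fix p assume p: "p \<in> S"
    let ?c = "dec p"
    let ?k = "length ?c"
    have "openin X U" "U \<noteq> {}" using pB that by (auto simp: pi_base_def)
    then obtain d where d: "d \<in> D ?k" "d \<in> U" using Dmeet by blast
    let ?q = "?c @ [{d}]"
    have qC: "?q \<in> C" using decS[OF p] d DT
    proof -
      have c: "dec p \<in> C" using decS[OF p] .
      have "\<forall>i<length ?q. ?q ! i \<subseteq> D i"
      proof (intro allI impI)
        fix i assume "i < length ?q"
        then have "i < ?k \<or> i = ?k" by auto
        then show "?q ! i \<subseteq> D i"
        proof
          assume "i < ?k" then show ?thesis using c by (simp add: C_def nth_append)
        next
          assume "i = ?k" then show ?thesis using d by simp
        qed
      qed
      moreover have "?q \<in> lists {A. finite A \<and> A \<subseteq> topspace X}"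
        using c d DT unfolding C_def by auto
      ultimately show ?thesis unfolding C_def by blast
    qed
    have "enc ?q \<in> DU U"
      unfolding DU_def using qC decenc[OF qC] d by (auto simp: S_def intro!: exI[of _ ?k])
    moreover have "le (enc ?q) p" unfolding le_def using decenc[OF qC] by simp
    ultimately show "\<exists>q\<in>DU U. le q p" by blast
  qed
  obtain G where G: "filter_poset S le G" and GD: "\<forall>U\<in>B. G \<inter> DU U \<noteq> {}"
  proof -
    have "ctbl_poset S le \<and> (\<forall>i\<in>B. dense_poset S le (DU i)) \<longrightarrow>
        (\<exists>G. filter_poset S le G \<and> (\<forall>i\<in>B. G \<inter> DU i \<noteq> {}))"
      using MA unfolding MA_countable_def by (rule spec[of _ DU, OF spec[of _ le, OF spec[of _ S]]])
    then show ?thesis using poset dense that by blast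
  qed
  have GS: "G \<subseteq> S" using G by (simp add: filter_poset_def)
  have compat: "g1 \<in> G \<Longrightarrow> g2 \<in> G \<Longrightarrow> n < length (dec g1) \<Longrightarrow> n < length (dec g2)
      \<Longrightarrow> dec g1 ! n = dec g2 ! n" for g1 g2 n
  proof -
    assume a: "g1 \<in> G" "g2 \<in> G" "n < length (dec g1)" "n < length (dec g2)"
    then obtain r where "r \<in> G" "le r g1" "le r g2" using G unfolding filter_poset_def by blast
    then have "prefix (dec g1) (dec r)" "prefix (dec g2) (dec r)" unfolding le_def by auto
    then show ?thesis using a(3,4) prefix_nth_eq by metis
  qed
  define F where "F = (\<lambda>n. \<Union>{dec g ! n | g. g \<in> G \<and> n < length (dec g)})"
  have Fsub: "F n \<subseteq> D n" for n
  proof -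
    have "dec g ! n \<subseteq> D n" if "g \<in> G" "n < length (dec g)" for g
    proof -
      have "dec g \<in> C" using decS GS that(1) by blast
      then show ?thesis using that(2) unfolding C_def by blast
    qed
    then show ?thesis unfolding F_def by blast
  qed
  have Ffin: "finite (F n)" for n
  proof (cases "\<exists>g. g \<in> G \<and> n < length (dec g)")
    case True
    then obtain g0 where g0: "g0 \<in> G" "n < length (dec g0)" by blast
    have "F n \<subseteq> dec g0 ! n" unfolding F_def using compat[OF _ g0(1) _ g0(2)] by blast
    moreover have "finite (dec g0 ! n)"
    proof -
      have "dec g0 \<in> C" using decS GS g0(1) by blast
      then have "\<forall>x\<in>set (dec g0). finite x" unfolding C_def by (auto simp: lists_eq_set)
      then show ?thesis using g0(2) nth_mem by blast
    qed
    ultimately show ?thesis by (rule finite_subset)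
  next
    case False
    then have "F n = {}" unfolding F_def by blast
    then show ?thesis by simp
  qed
  have "dense_in X (\<Union>n. F n)"
    unfolding dense_in_def dense_intersects_open
  proof (intro conjI allI impI)
    show "(\<Union>n. F n) \<subseteq> topspace X" using Fsub DT by blast
    fix V assume V: "openin X V \<and> V \<noteq> {}"
    then obtain U where U: "U \<in> B" "U \<subseteq> V" using pB unfolding pi_base_def by blast
    then obtain g where g: "g \<in> G" "g \<in> DU U" using GD by blast
    then obtain i where i: "i < length (dec g)" "dec g ! i \<inter> U \<noteq> {}" by (auto simp: DU_def)
    have "dec g ! i \<subseteq> F i" unfolding F_def using g i by blast
    then show "(\<Union>n. F n) \<inter> V \<noteq> {}" using i U by blast
  qed
  then show "\<exists>F. (\<forall>n. finite (F n) \<and> F n \<subseteq> D n) \<and> dense_in X (\<Union>n. F n)"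
    using Ffin Fsub by blast
qed

end
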